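(* In the left-censored disclosure game described in the context, reparametrize by $\gamma=p/q>1$ and $\kappa=1/(1-p-q)>1$ (so that $(\gamma,\kappa)$ determines $(p,q)$), and consider, for fixed $e\in E$ and $\pi_0$, $$V(e)=\frac{1}{1+\frac{1-\pi_0}{\pi_0}\frac{p-\alpha}{q-\alpha}\left(\frac{q}{p}\right)^{N(e)+1}},\quad \alpha=\frac{1-\sqrt{1-4pq}}{2},\quad N(e)=\max_{0\le k\le L(e)}D(e|_k),$$ the sender's equilibrium value. Then: (1) $V(e)$ is decreasing in $\kappa$ (holding $\gamma$ fixed), for all $e\in E$. (2) If $N(e)=0$, $V(e)$ is decreasing in $\gamma$ (holding $\kappa$ fixed). If $N(e)>0$, there exists $\hat\gamma>1$ such that $V(e)$ is increasing in $\gamma$ when $\gamma>\hat\gamma$ (holding $\kappa$ fixed, for any $\kappa>1$), and the threshold $\hat\gamma\to1$ as $N(e)\to\infty$. (3) Fixing $e\in E$ and $q\in(0,\tfrac12)$, there exists $\hat p\in[q,1-q)$ such that, as a function of $p\in(q,1-q)$, $V(e)$ is increasing in $p$ for $p<\hat p$ and decreasing in $p$ for $p>\hat p$; moreover $\hat p$ is non-decreasing in $N(e)$.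
   Context: Left-censored disclosure game. A state $\omega\in\{G,B\}$ has prior probability $\pi_0\in(0,1)$ on $G$. The evidence space $E=\bigcup_{t\ge0}\{g,b\}^t$ is the set of finite sequences of signals in $\{g,b\}$, including the empty sequence $\emptyset$. For $e\in E$: $L(e)$ is its length, $G(e)$ and $B(e)$ the numbers of $g$'s and $b$'s, $D(e)=G(e)-B(e)$; for $e=(s_1,\dots,s_L)$ and $0<k\le L$, $e|_k=(s_{L-k+1},\dots,s_L)$, and $e|_0=\emptyset$. Parameters satisfy $1>p>q>0$ and $p+q<1$; evidence is drawn from $F_\omega$ with $F_G(e)=(1-p-q)p^{G(e)}q^{B(e)}$, $F_B(e)=(1-p-q)p^{B(e)}q^{G(e)}$. The disclosure rule allows a sender with evidence $e$ to send any message $e|_k$, $0\le k\le L(e)$. The receiver's optimal action equals his posterior belief on $G$, and the sender's payoff is the receiver's action. In this game the sender's value function (her payoff in any truth-leaning equilibrium) is given by the displayed formula for $V(e)$; $\gamma$ measures signal informativeness and $\kappa$ is the expected length of evidence. *)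

theory Defs
  imports "HOL-Analysis.Analysis"
begin

text \<open>Evidence: a finite sequence of signals; True encodes the signal g, False encodes b.\<close>
type_synonym evidence = "bool list"

definition Gcnt :: "evidence \<Rightarrow> nat" where
  "Gcnt e = length (filter (\<lambda>s. s) e)"

definition Bcnt :: "evidence \<Rightarrow> nat" where
  "Bcnt e = length (filter (\<lambda>s. \<not> s) e)"

definition Dval :: "evidence \<Rightarrow> int" where
  "Dval e = int (Gcnt e) - int (Bcnt e)"

definition restr :: "evidence \<Rightarrow> nat \<Rightarrow> evidence" where
  "restr e k = drop (length e - k) e"

definition Nval :: "evidence \<Rightarrow> int" where
  "Nval e = Max ((\<lambda>k. Dval (restr e k)) ` {0..length e})"

definition alpha :: "real \<Rightarrow> real \<Rightarrow> real" where
  "alpha p q = (1 - sqrt (1 - 4 * p * q)) / 2"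

definition Vval :: "real \<Rightarrow> real \<Rightarrow> real \<Rightarrow> evidence \<Rightarrow> real" where
  "Vval pi0 p q e =
     1 / (1 + (1 - pi0) / pi0 * ((p - alpha p q) / (q - alpha p q)) * (q / p) powi (Nval e + 1))"

text \<open>Reparametrisation: gamma = p/q, kappa = 1/(1-p-q), inverted.\<close>
definition q_of :: "real \<Rightarrow> real \<Rightarrow> real" where
  "q_of \<gamma> \<kappa> = (1 - 1 / \<kappa>) / (\<gamma> + 1)"

definition p_of :: "real \<Rightarrow> real \<Rightarrow> real" where
  "p_of \<gamma> \<kappa> = \<gamma> * q_of \<gamma> \<kappa>"

definition Vgk :: "real \<Rightarrow> real \<Rightarrow> real \<Rightarrow> evidence \<Rightarrow> real" where
  "Vgk pi0 \<gamma> \<kappa> e = Vval pi0 (p_of \<gamma> \<kappa>) (q_of \<gamma> \<kappa>) e"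

end

theory Submission
  imports Defs "HOL-Real_Asymp.Real_Asymp"
begin

lemma Nval_nonneg: "0 \<le> Nval e"
proof -
  have "Dval (restr e 0) = 0" by (simp add: restr_def Dval_def Gcnt_def Bcnt_def)
  moreover have "Dval (restr e 0) \<in> (\<lambda>k. Dval (restr e k)) ` {0..length e}" by auto
  ultimately show ?thesis unfolding Nval_def by (metis Max_ge finite_atLeastAtMost finite_imageI)
qed

lemma Vval_X: "Vval pi0 p q e = 1/(1 + (1-pi0)/pi0 * ((p - alpha p q)/(q - alpha p q) * (q/p)^(nat (Nval e) + 1)))"
proof -
  have "Nval e + 1 = int (nat (Nval e) + 1)" using Nval_nonneg[of e] by simp
  then have "(q/p) powi (Nval e + 1) = (q/p)^(nat (Nval e) + 1)" by (metis power_int_of_nat)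
  then show ?thesis unfolding Vval_def by (simp add: mult.assoc)
qed

lemma alpha_basic:
  assumes "0<q" "q\<le>p" "p+q<1"
  shows "0 < alpha p q" "alpha p q < q" "alpha p q * (1 - alpha p q) = p*q"
    "sqrt (1-4*p*q) ^2 = 1 - 4*p*q" "1 - 2*q < sqrt (1-4*p*q)" "sqrt (1-4*p*q) < 1"
proof -
  have pq: "0 < p*q" using assms by simp
  have "(p+q)^2 - 4*p*q = (p-q)^2" by (simp add: power2_eq_square algebra_simps)
  then have a: "4*p*q \<le> (p+q)^2" by (metis diff_ge_0_iff_ge zero_le_power2)
  have "(p+q)^2 < 1" proof -
    have "(p+q)*(p+q) < 1*1" using assms pq by (intro mult_strict_mono) auto
    then show ?thesis by (simp add: power2_eq_square)
  qed
  with a have pos: "0 < 1 - 4*p*q" by linarith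
  show sq: "sqrt (1-4*p*q) ^2 = 1 - 4*p*q" using pos by simp
  show u1: "sqrt (1-4*p*q) < 1" using pq by (simp add: real_sqrt_less_iff)
  have "q*q < q*(1-p)" using assms by (intro mult_strict_left_mono) auto
  then have "(1-2*q)^2 < 1-4*p*q" by (simp add: power2_eq_square algebra_simps)
  moreover have "0 \<le> 1 - 2*q" using assms by simp
  ultimately show u2: "1 - 2*q < sqrt (1-4*p*q)" by (simp add: real_less_rsqrt)
  show "0 < alpha p q" using u1 by (simp add: alpha_def)
  show "alpha p q < q" using u2 by (simp add: alpha_def)
  define u where "u = sqrt (1-4*p*q)"
  have h: "alpha p q = (1-u)/2" by (simp add: alpha_def u_def)
  have uu: "u*u = 1-4*p*q" using sq by (simp add: u_def power2_eq_square)
  have "alpha p q * (1 - alpha p q) = (1-u)/2 * ((1+u)/2)" unfolding h by (simp add: field_simps)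
  also have "\<dots> = (1 - u*u)/4" by (simp add: field_simps algebra_simps)
  finally show "alpha p q * (1 - alpha p q) = p*q" using uu by simp
qed


lemma V_mono: fixes C X1 X2 :: real
  assumes "0 < C" "0 < X1" "X1 < X2" shows "1/(1+C*X2) < 1/(1+C*X1)"
proof -
  have "C*X1 < C*X2" using assms by simp
  moreover have "0 < C*X1" using assms by simp
  ultimately show ?thesis by (simp add: frac_less2)
qed

lemma gk_basic:
  assumes "1 < g" "1 < k"
  shows "0 < q_of g k" "q_of g k < p_of g k" "p_of g k + q_of g k = 1 - 1/k"
    "p_of g k + q_of g k < 1" "p_of g k = g * q_of g k"
proof -
  have k: "0 < 1 - 1/k" "1/k > 0" using assms by auto
  show q: "0 < q_of g k" using assms k by (simp add: q_of_def)
  show "q_of g k < p_of g k" using q assms by (simp add: p_of_def)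
  have "p_of g k + q_of g k = (g+1) * q_of g k" by (simp add: p_of_def algebra_simps)
  also have "\<dots> = 1 - 1/k" using assms unfolding q_of_def by simp
  finally show s: "p_of g k + q_of g k = 1 - 1/k" .
  show "p_of g k + q_of g k < 1" using s k by simp
  show "p_of g k = g * q_of g k" by (simp add: p_of_def)
qed

lemma part1:
  assumes pi: "0 < pi0" "pi0 < 1" and g: "1 < g" and k: "1 < k1" "k1 < k2"
  shows "Vgk pi0 g k2 e < Vgk pi0 g k1 e"
proof -
  define q1 where "q1 = q_of g k1"
  define q2 where "q2 = q_of g k2"
  have k2: "1 < k2" using k by simp
  note b1 = gk_basic[OF g k(1), folded q1_def]
  note b2 = gk_basic[OF g k2, folded q2_def]
  have "1/k2 < 1/k1" using k by (simp add: frac_less2)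
  then have q12: "q1 < q2" using g unfolding q1_def q2_def q_of_def by (simp add: divide_strict_right_mono)
  define N where "N = nat (Nval e)"
  define C where "C = (1-pi0)/pi0"
  have C: "0 < C" using pi by (simp add: C_def)
  define t where "t = (\<lambda>q. alpha (g*q) q / q)"
  define u where "u = (\<lambda>q::real. sqrt (1 - 4*(g*q)*q))"
  have unn: "0 \<le> u q" if "0 < q" "g*q + q < 1" for q
  proof -
    have "1 - 2*q < sqrt (1-4*(g*q)*q)" using alpha_basic[of q "g*q"] that g by auto
    moreover have "q < g*q" using that g by simp
    ultimately show ?thesis using that unfolding u_def by linarith
  qed
  have tform: "t q = 2*g*q/(1 + u q)" if "0 < q" "g*q + q < 1" for q
  proof -
    have ab: "0 < alpha (g*q) q" "alpha (g*q) q < q" "sqrt (1 - 4*(g*q)*q)^2 = 1 - 4*(g*q)*q" "sqrt (1-4*(g*q)*q) < 1" "1 - 2*q < sqrt (1-4*(g*q)*q)"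
      using alpha_basic[of q "g*q"] that g by auto
    have "q < g*q" using that g by simp
    then have u0: "0 \<le> u q" using ab(5) that g unfolding u_def by linarith
    have uu: "u q * u q = 1 - 4*(g*q)*q" using ab(3) by (simp add: u_def power2_eq_square)
    have "t q = (1 - u q)/(2*q)" by (simp add: t_def alpha_def u_def)
    also have "\<dots> = (1 - u q)*(1 + u q)/(2*q*(1 + u q))" using u0 by simp
    also have "(1 - u q)*(1 + u q) = 4*g*q*q" using uu by (simp add: algebra_simps)
    also have "4*g*q*q/(2*q*(1 + u q)) = 2*g*q/(1 + u q)"
    proof -
      have p1: "0 < 1 + u q" using u0 by simp
      have "4*g*q*q/(2*q*(1 + u q)) = (2*g*q*(2*q))/((1 + u q)*(2*q))" by (simp add: algebra_simps)
      also have "\<dots> = 2*g*q/(1 + u q)" using that by (rule_tac mult_divide_mult_cancel_right) simp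
      finally show ?thesis .
    qed
    finally show ?thesis .
  qed
  have tlt: "t q < 1" "0 < t q" if "0 < q" "g*q + q < 1" for q
    using alpha_basic[of q "g*q"] that g by (auto simp: t_def)
  have Rform: "(g*q - alpha (g*q) q)/(q - alpha (g*q) q) = (g - t q)/(1 - t q)" if "0 < q" for q
  proof -
    have e1: "g - t q = (g*q - alpha (g*q) q)/q" "1 - t q = (q - alpha (g*q) q)/q"
      using that by (simp_all add: t_def field_simps)
    show ?thesis unfolding e1 using that by simp
  qed
  have s1: "g*q1 + q1 < 1" "g*q2+q2 < 1" using b1 b2 by auto
  have "u q2 < u q1"
  proof -
    have "q1*q1 < q2*q2" using q12 b1 by (intro mult_strict_mono) auto
    then have "1 - 4*(g*q2)*q2 < 1 - 4*(g*q1)*q1" using g by (simp add: algebra_simps)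
    then show ?thesis by (simp add: u_def)
  qed
  then have t12: "t q1 < t q2"
  proof -
    have "2*g*q1/(1 + u q1) < 2*g*q2/(1 + u q2)"
      using \<open>u q2 < u q1\<close> q12 g b1 unn[OF b2(1) s1(2)] by (intro frac_less) auto
    then show ?thesis using tform[OF b1(1) s1(1)] tform[OF b2(1) s1(2)] by simp
  qed
  have t1: "t q1 < 1" "0 < t q1" using tlt[OF b1(1) s1(1)] by auto
  have t2: "t q2 < 1" "0 < t q2" using tlt[OF b2(1) s1(2)] by auto
  have R12: "(g - t q1)/(1 - t q1) < (g - t q2)/(1 - t q2)"
  proof -
    have "(g-1) * t q1 < (g-1) * t q2" using t12 g by simp
    then have "(g - t q1)*(1 - t q2) < (g - t q2)*(1 - t q1)" by (simp add: algebra_simps)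
    then show ?thesis using t1 t2 by (simp add: field_simps)
  qed
  have R1pos: "0 < (g - t q1)/(1 - t q1)" using t1 g by simp
  have V: "Vgk pi0 g k e = 1/(1 + C*((g - t (q_of g k))/(1 - t (q_of g k)) * (1/g)^(N+1)))" if "1 < k" for k
  proof -
    note bb = gk_basic[OF g that]
    have "(q_of g k / p_of g k) = 1/g" using bb by simp
    then show ?thesis unfolding Vgk_def Vval_X C_def N_def using Rform[OF bb(1)] bb(5) by simp
  qed
  have gp: "0 < (1/g)^(N+1)" using g by simp
  show ?thesis unfolding V[OF k(1)] V[OF k2] q1_def[symmetric] q2_def[symmetric]
    apply (rule V_mono[OF C])
    using R1pos gp apply (rule mult_pos_pos)
    using R12 gp by (rule mult_strict_right_mono)
qed


definition hh :: "real \<Rightarrow> real \<Rightarrow> real" where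
  "hh p q = sqrt (1 - 4*p*q) - (p - q)"

lemma rep2:
  assumes "0<q" "q<p" "p+q<1"
  defines "a \<equiv> 1 - (p+q)" and "b \<equiv> 1 + (p+q)"
  shows "0 < a" "a < hh p q" "hh p q < b" "hh p q * (hh p q + 2*(p-q)) = a*b"
    "(p - alpha p q)/(q - alpha p q) = a*(b - hh p q)/(hh p q*(hh p q - a))"
    "q/p = (hh p q - a)*(hh p q + b)/((b - hh p q)*(hh p q + a))"
proof -
  define h where "h = hh p q"
  define u where "u = sqrt (1-4*p*q)"
  define d where "d = p - q"
  note ab = alpha_basic[of q p, OF assms(1) less_imp_le[OF assms(2)] assms(3)]
  have uu: "u*u = 1 - 4*p*q" using ab(4) assms(2) by (simp add: u_def power2_eq_square)
  have hu: "u = h + d" by (simp add: h_def hh_def u_def d_def)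
  show a0: "0 < a" using assms by (simp add: a_def)
  show ha': "a < hh p q" using ab(5) assms(2) by (simp add: hh_def a_def)
  then have ha: "a < h" by (simp add: h_def)
  show "hh p q < b" using ab(6) assms unfolding hh_def b_def by linarith
  have key: "h * (h + 2*d) = a*b"
  proof -
    have "(h+d)*(h+d) = 1 - 4*p*q" using uu hu by simp
    then show ?thesis by (simp add: a_def b_def d_def algebra_simps)
  qed
  then show "hh p q * (hh p q + 2*(p-q)) = a*b" by (simp add: h_def d_def)
  have h0: "0 < h" using a0 ha by simp
  have al: "alpha p q = (1 - u)/2" by (simp add: alpha_def u_def)
  have qa: "q - alpha p q = (h - a)/2" unfolding al hu by (simp add: a_def d_def field_simps)
  have pa: "p - alpha p q = a*(b-h)/(2*h)"
  proof -
    have "p - alpha p q = (h + 2*d - a)/2" unfolding al hu by (simp add: a_def d_def field_simps)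
    also have "\<dots> = h*(h + 2*d - a)/(2*h)" using h0 by simp
    also have "h*(h + 2*d - a) = a*(b-h)" using key by (simp add: algebra_simps)
    finally show ?thesis .
  qed
  show "(p - alpha p q)/(q - alpha p q) = a*(b - hh p q)/(hh p q*(hh p q - a))"
    unfolding h_def[symmetric] pa qa using h0 ha by (simp add: field_simps)
  have qf: "q = (h-a)*(h+b)/(4*h)"
  proof -
    have "(h-a)*(h+b) - h*(4*q) = h*(h+2*d) - a*b" by (simp add: a_def b_def d_def algebra_simps)
    then have "(h-a)*(h+b) = h*(4*q)" using key by linarith
    then show ?thesis using h0 by simp
  qed
  have pf: "p = (b-h)*(h+a)/(4*h)"
  proof -
    have "(b-h)*(h+a) - h*(4*p) = a*b - h*(h+2*d)" by (simp add: a_def b_def d_def algebra_simps)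
    then have "(b-h)*(h+a) = h*(4*p)" using key by linarith
    then show ?thesis using h0 by simp
  qed
  show "q/p = (hh p q - a)*(hh p q + b)/((b - hh p q)*(hh p q + a))"
    unfolding h_def[symmetric] using h0 by (subst qf, subst pf) simp
qed


lemma hmono:
  assumes "0<q1" "q1<p1" "0<q2" "q2<p2" "p1+q1 = p2+q2" "p2+q2<1" "p1-q1 < p2-q2"
  shows "hh p2 q2 < hh p1 q1"
proof (rule ccontr)
  assume "\<not> ?thesis"
  then have le: "hh p1 q1 \<le> hh p2 q2" by simp
  have s1: "p1+q1<1" using assms by simp
  note r1 = rep2[OF assms(1,2) s1] and r2 = rep2[OF assms(3,4,6)]
  have "hh p1 q1 * (hh p1 q1 + 2*(p1-q1)) < hh p2 q2 * (hh p2 q2 + 2*(p2-q2))"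
    using le r1(1,2) assms by (intro mult_le_less_imp_less) auto
  then show False using r1(4) r2(4) assms(5) by simp
qed

lemma Xaux:
  fixes a h A B C D :: real
  assumes "0<a" "0<h" "0<A" "0<B" "0<C" "0<D"
  shows "a*C/(h*A) * (A*B/(C*D))^(N+1) = a * (A^N/(h*D^(N+1))) * (B^(N+1)/C^N)"
proof -
  have "(A*B/(C*D))^(N+1) = (A*A^N)*B^(N+1)/((C*C^N)*D^(N+1))"
    by (simp add: power_divide power_mult_distrib del: power_Suc) (simp only: power_Suc)
  then show ?thesis using assms by (simp del: power_Suc add: field_simps)
qed

lemma Xform:
  assumes "0<q" "q<p" "p+q<1"
  defines "a \<equiv> 1 - (p+q)" and "b \<equiv> 1 + (p+q)" and "h \<equiv> hh p q"
  shows "(p - alpha p q)/(q - alpha p q) * (q/p)^(N+1)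
     = a * ((h-a)^N/(h*(h+a)^(N+1))) * ((h+b)^(N+1)/(b-h)^N)"
proof -
  note r = rep2[OF assms(1,2,3), folded a_def b_def h_def]
  have pos: "0 < h" "0 < h - a" "0 < b - h" "0 < h + a" "0 < h+b" using r by auto
  show ?thesis unfolding r(5) r(6) using pos r(1)
    by (intro Xaux) auto
qed


lemma ktil_mono:
  fixes a h1 h2 :: real and N :: nat
  assumes a: "0 < a" "a < h1" "h1 < h2" "h2 \<le> (real N + 1/2) * a"
  shows "(h1-a)^N/(h1*(h1+a)^(N+1)) < (h2-a)^N/(h2*(h2+a)^(N+1))"
proof -
  define L where "L = (\<lambda>h. real N * ln (h-a) - (ln h + real (N+1) * ln (h+a)))"
  have lnk: "ln ((h-a)^N/(h*(h+a)^(N+1))) = L h" if "a < h" for h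
  proof -
    have p: "0 < h - a" "0 < h" "0 < h + a" using that a by auto
    have "ln ((h-a)^N/(h*(h+a)^(N+1))) = ln ((h-a)^N) - ln (h*(h+a)^(N+1))"
      using p by (intro ln_divide_pos) auto
    also have "ln (h*(h+a)^(N+1)) = ln h + ln ((h+a)^(N+1))" using p by (intro ln_mult_pos) auto
    also have "ln ((h+a)^(N+1)) = real (N+1) * ln (h+a)" by (rule ln_realpow)
    also have "ln ((h-a)^N) = real N * ln (h-a)" by (rule ln_realpow)
    finally show ?thesis by (simp add: L_def)
  qed
  have "L h1 < L h2"
  proof (rule DERIV_pos_imp_increasing[OF a(3)])
    fix x assume x: "h1 \<le> x" "x \<le> h2"
    then have xa: "a < x" "0 < x" using a by auto
    have D: "DERIV L x :> real N * (1/(x-a)) - (1/x + real (N+1) * (1/(x+a)))"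
      unfolding L_def using xa a
      by (auto intro!: derivative_eq_intros)
    have num: "0 < -2*x*x + (2*real N+1)*a*x + a*a"
    proof -
      have "(2*real N+1)*a = 2*((real N + 1/2)*a)" by (simp add: algebra_simps)
      then have "2*x \<le> (2*real N+1)*a" using x a by linarith
      then have "2*x*x \<le> (2*real N+1)*a*x" using xa by (intro mult_right_mono) auto
      moreover have "0 < a*a" using a by simp
      ultimately show ?thesis by linarith
    qed
    have "real N * (1/(x-a)) - (1/x + real (N+1) * (1/(x+a)))
        = (-2*x*x + (2*real N+1)*a*x + a*a) / (x*(x-a)*(x+a))"
    proof -
      have nz: "x - a \<noteq> 0" "x \<noteq> 0" "x + a \<noteq> 0" using xa a by auto
      show ?thesis using nz by (simp add: divide_simps) (simp add: algebra_simps)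
    qed
    also have "\<dots> > 0" using num xa a by simp
    finally show "\<exists>y. DERIV L x :> y \<and> 0 < y" using D by blast
  qed
  then have "ln ((h1-a)^N/(h1*(h1+a)^(N+1))) < ln ((h2-a)^N/(h2*(h2+a)^(N+1)))"
    using lnk[of h1] lnk[of h2] a by simp
  moreover have "0 < (h1-a)^N/(h1*(h1+a)^(N+1))" "0 < (h2-a)^N/(h2*(h2+a)^(N+1))" using a by auto
  ultimately show ?thesis by simp
qed


lemma gk_setup:
  assumes "1 < k" "1 < g1" "g1 < g2"
  shows "hh (p_of g2 k) (q_of g2 k) < hh (p_of g1 k) (q_of g1 k)"
proof -
  have g2: "1 < g2" using assms by simp
  note b1 = gk_basic[OF assms(2,1)] and b2 = gk_basic[OF g2 assms(1)]
  have d: "p_of g k - q_of g k = (1 - 1/k) * ((g-1)/(g+1))" if "1 < g" for g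
  proof -
    have "p_of g k - q_of g k = (g-1) * q_of g k" by (simp add: p_of_def algebra_simps)
    then show ?thesis by (simp add: q_of_def)
  qed
  have "(g1-1)/(g1+1) < (g2-1)/(g2+1)" using assms by (simp add: field_simps)
  moreover have "0 < 1 - 1/k" using assms by simp
  ultimately have "(1 - 1/k) * ((g1-1)/(g1+1)) < (1 - 1/k) * ((g2-1)/(g2+1))"
    by (rule mult_strict_left_mono)
  then have "p_of g1 k - q_of g1 k < p_of g2 k - q_of g2 k"
    unfolding d[OF assms(2)] d[OF g2] .
  then show ?thesis using b1 b2 by (intro hmono) auto
qed

lemma Vgk_form:
  fixes e :: evidence
  assumes "1 < k" "1 < g" "0 < pi0"
  defines "a \<equiv> 1/k" and "b \<equiv> 2 - 1/k" and "h \<equiv> hh (p_of g k) (q_of g k)" and "N \<equiv> nat (Nval e)"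
  shows "Vgk pi0 g k e = 1/(1 + (1-pi0)/pi0 * (a * ((h-a)^N/(h*(h+a)^(N+1))) * ((h+b)^(N+1)/(b-h)^N)))"
    "0 < a" "a < h" "h < b"
    "q_of g k / p_of g k = (h-a)*(h+b)/((b-h)*(h+a))"
proof -
  note bb = gk_basic[OF assms(2,1)]
  have ab: "a = 1 - (p_of g k + q_of g k)" "b = 1 + (p_of g k + q_of g k)"
    using bb(3) by (simp_all add: a_def b_def)
  note r = rep2[OF bb(1,2,4), folded ab h_def]
  show "Vgk pi0 g k e = 1/(1 + (1-pi0)/pi0 * (a * ((h-a)^N/(h*(h+a)^(N+1))) * ((h+b)^(N+1)/(b-h)^N)))"
    unfolding Vgk_def Vval_X N_def[symmetric] Xform[OF bb(1,2,4), folded ab h_def] by simp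
  show "0 < a" "a < h" "h < b" "q_of g k / p_of g k = (h-a)*(h+b)/((b-h)*(h+a))" using r by auto
qed

lemma part2a:
  assumes pi: "0 < pi0" "pi0 < 1" and N0: "Nval e = 0" and k: "1 < k" and g: "1 < g1" "g1 < g2"
  shows "Vgk pi0 g2 k e < Vgk pi0 g1 k e"
proof -
  have g2: "1 < g2" using g by simp
  define a where "a = 1/k"
  define b where "b = 2 - 1/k"
  define h1 where "h1 = hh (p_of g1 k) (q_of g1 k)"
  define h2 where "h2 = hh (p_of g2 k) (q_of g2 k)"
  note f1 = Vgk_form[OF k g(1) pi(1), folded a_def b_def h1_def]
  note f2 = Vgk_form[OF k g2 pi(1), folded a_def b_def h2_def]
  have h21: "h2 < h1" unfolding h1_def h2_def using gk_setup[OF k g] .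
  have N: "nat (Nval e) = 0" using N0 by simp
  have X: "a * ((h-a)^0/(h*(h+a)^(0+1))) * ((h+b)^(0+1)/(b-h)^0) = a/h * ((h+b)/(h+a))" for h
    by simp
  have C: "0 < (1-pi0)/pi0" using pi by simp
  have m1: "a/h1 < a/h2" using f1 f2 h21 by (intro divide_strict_left_mono) auto
  have m2: "(h1+b)/(h1+a) \<le> (h2+b)/(h2+a)"
  proof -
    have "(h1+b)*(h2+a) \<le> (h2+b)*(h1+a)"
    proof -
      have "(h1+b)*(h2+a) - (h2+b)*(h1+a) = (a - b)*(h1 - h2)" by (simp add: algebra_simps)
      moreover have "(a - b)*(h1 - h2) \<le> 0" using f1 f2 h21 by (intro mult_nonpos_nonneg) auto
      ultimately show ?thesis by linarith
    qed
    then show ?thesis using f1 f2 by (simp add: divide_simps)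
  qed
  have "a/h1 * ((h1+b)/(h1+a)) < a/h2 * ((h2+b)/(h2+a))"
    using m1 m2 f1 f2 by (intro mult_less_le_imp_less) auto
  moreover have "0 < a/h1 * ((h1+b)/(h1+a))" using f1 by simp
  ultimately show ?thesis unfolding f1(1) f2(1) N X by (rule V_mono[OF C, rotated])
qed


definition ghat :: "int \<Rightarrow> real" where
  "ghat n = (2 * real_of_int n + 3) / (2 * real_of_int n - 1)"

lemma ghat_gt1: "0 < n \<Longrightarrow> 1 < ghat n"
  by (simp add: ghat_def field_simps)

lemma hbound:
  fixes N :: nat
  assumes "1 \<le> N" "(2*real N+3)/(2*real N-1) < g" "0 < a" "a < h" "h < b"
    "1/g = (h-a)*(h+b)/((b-h)*(h+a))"
  shows "h < (real N + 1/2) * a"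
proof -
  have g: "1 < g" using assms(1,2) by (smt (verit) divide_less_eq_1 of_nat_1 of_nat_le_iff)
  have r1: "(h-a)/(h+a) \<le> (h-a)*(h+b)/((b-h)*(h+a))"
  proof -
    have "(h-a)/(h+a) * 1 \<le> (h-a)/(h+a) * ((h+b)/(b-h))"
      using assms by (intro mult_left_mono) auto
    then show ?thesis by (simp add: mult.commute)
  qed
  have N1: "0 < 2*real N - 1" using assms(1) by simp
  have "1/g < (2*real N-1)/(2*real N+3)"
  proof -
    have "2*real N+3 < g*(2*real N-1)" using assms(2) N1 by (simp add: pos_divide_less_eq)
    then show ?thesis using g N1 by (simp add: divide_simps mult.commute)
  qed
  then have "(h-a)/(h+a) < (2*real N-1)/(2*real N+3)" using r1 assms(6) by simp
  then have "(h-a)*(2*real N+3) < (2*real N-1)*(h+a)" using assms N1 by (simp add: divide_simps)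
  then show ?thesis by (simp add: algebra_simps)
qed

lemma part2b:
  assumes pi: "0 < pi0" "pi0 < 1" and N0: "0 < Nval e" and k: "1 < k"
    and g: "ghat (Nval e) < g1" "g1 < g2"
  shows "Vgk pi0 g1 k e < Vgk pi0 g2 k e"
proof -
  define N where "N = nat (Nval e)"
  have N1: "1 \<le> N" using N0 by (simp add: N_def)
  have gh: "ghat (Nval e) = (2*real N+3)/(2*real N-1)" using N0 by (simp add: ghat_def N_def)
  have g1: "1 < g1" using ghat_gt1[OF N0] g by simp
  have g2: "1 < g2" using g1 g by simp
  define a where "a = 1/k"
  define b where "b = 2 - 1/k"
  define h1 where "h1 = hh (p_of g1 k) (q_of g1 k)"
  define h2 where "h2 = hh (p_of g2 k) (q_of g2 k)"
  note f1 = Vgk_form[OF k g1 pi(1), folded a_def b_def h1_def]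
  note f2 = Vgk_form[OF k g2 pi(1), folded a_def b_def h2_def]
  have h21: "h2 < h1" unfolding h1_def h2_def using gk_setup[OF k g1 g(2)] .
  have qp: "q_of g k / p_of g k = 1/g" if "1 < g" for g
    using gk_basic[OF that k] by simp
  have hb1: "h1 < (real N + 1/2) * a"
    using f1 qp[OF g1] g gh N1 by (intro hbound[of N g1 a h1 b]) auto
  have C: "0 < (1-pi0)/pi0" using pi by simp
  have kk: "(h2-a)^N/(h2*(h2+a)^(N+1)) < (h1-a)^N/(h1*(h1+a)^(N+1))"
    using f1 f2 h21 hb1 by (intro ktil_mono) auto
  have mm: "(h2+b)^(N+1)/(b-h2)^N \<le> (h1+b)^(N+1)/(b-h1)^N"
  proof (rule frac_le)
    show "0 \<le> (h1+b)^(N+1)" using f1 by simp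
    show "(h2+b)^(N+1) \<le> (h1+b)^(N+1)" using f1 f2 h21 by (intro power_mono) auto
    show "0 < (b-h1)^N" using f1 by simp
    show "(b-h1)^N \<le> (b-h2)^N" using f1 f2 h21 by (intro power_mono) auto
  qed
  have "a * ((h2-a)^N/(h2*(h2+a)^(N+1))) * ((h2+b)^(N+1)/(b-h2)^N)
      < a * ((h1-a)^N/(h1*(h1+a)^(N+1))) * ((h1+b)^(N+1)/(b-h1)^N)"
    using kk mm f1 f2 by (intro mult_less_le_imp_less mult_strict_left_mono) auto
  moreover have "0 < a * ((h2-a)^N/(h2*(h2+a)^(N+1))) * ((h2+b)^(N+1)/(b-h2)^N)"
    using f2 by simp
  ultimately show ?thesis unfolding f1(1) f2(1) N_def[symmetric] by (rule V_mono[OF C, rotated])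
qed

lemma ghat_lim: "(ghat \<longlongrightarrow> 1) at_top"
proof -
  have "((\<lambda>x::real. (2*x+3)/(2*x-1)) \<longlongrightarrow> 1) at_top" by real_asymp
  then show ?thesis unfolding ghat_def
    by (rule filterlim_compose) (rule filterlim_real_of_int_at_top)
qed


definition gg :: "real \<Rightarrow> nat \<Rightarrow> real \<Rightarrow> real" where
  "gg q N x = (1 - x - q)/((q - x) * x^N * (1-x)^(N+1))"

definition psi :: "real \<Rightarrow> nat \<Rightarrow> real \<Rightarrow> real" where
  "psi q n x = x*(1-2*q)/((q-x)*(1-q-x)) + (real n + 1)*(x/(1-x)) - real n"

lemma gaux:
  fixes A B q :: real
  assumes "0 < A" "0 < B" "0 < q" "A < q" "q < B"
  shows "(A*B/q - A)/(q - A) * (q/(A*B/q))^(N+1) = q^(2*N+1) * ((B - q)/((q - A) * A^N * B^(N+1)))"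
proof -
  have e1: "(A*B/q - A) = A*(B-q)/q" using assms by (simp add: field_simps)
  have e2: "q/(A*B/q) = (q*q)/(A*B)" using assms by simp
  have e3: "((q*q)/(A*B))^(N+1) = (q^N*q^N*(q*q))/((A*A^N)*(B^(N+1)))"
    by (simp add: power_divide power_mult_distrib power_add del: power_Suc) (simp add: power_Suc algebra_simps)
  have e4: "q^(2*N+1) = q^N*q^N*q" unfolding mult_2 power_add by simp
  show ?thesis unfolding e1 e2 e3 e4 using assms by (simp add: field_simps del: power_Suc)
qed

lemma Xg:
  assumes "0 < q" "q < p" "p < 1 - q"
  shows "(p - alpha p q)/(q - alpha p q) * (q/p)^(N+1) = q^(2*N+1) * gg q N (alpha p q)"
proof -
  note ab = alpha_basic[OF assms(1) less_imp_le[OF assms(2)]]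
  have s: "p + q < 1" using assms by simp
  have pe: "p = alpha p q * (1 - alpha p q) / q" using ab(3)[OF s] assms by simp
  have "1 - alpha p q > q" using ab(2)[OF s] assms s by simp
  then have "(p - alpha p q)/(q - alpha p q) * (q/p)^(N+1)
      = q^(2*N+1) * (((1 - alpha p q) - q)/((q - alpha p q) * (alpha p q)^N * (1 - alpha p q)^(N+1)))"
    using ab[OF s] assms by (subst (1 2) pe) (intro gaux, auto)
  then show ?thesis by (simp add: gg_def)
qed

lemma gg_mono:
  assumes q: "0 < q" "q < 1/2" and x: "0 < x1" "x1 < x2" "x2 < q"
  shows "(\<forall>x. x1 \<le> x \<and> x \<le> x2 \<longrightarrow> psi q N x < 0) \<Longrightarrow> gg q N x2 < gg q N x1"
    and "(\<forall>x. x1 \<le> x \<and> x \<le> x2 \<longrightarrow> 0 < psi q N x) \<Longrightarrow> gg q N x1 < gg q N x2"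
proof -
  define L where "L = (\<lambda>x. ln (1-x-q) - (ln (q-x) + real N * ln x + real (N+1) * ln (1-x)))"
  have lng: "ln (gg q N x) = L x" if "0 < x" "x < q" for x
  proof -
    have p: "0 < 1-x-q" "0 < q - x" "0 < x" "0 < 1-x" using that q by auto
    have "ln (gg q N x) = ln (1-x-q) - ln ((q - x) * x^N * (1-x)^(N+1))"
      unfolding gg_def using p by (intro ln_divide_pos) auto
    also have "ln ((q - x) * x^N * (1-x)^(N+1)) = ln ((q - x) * x^N) + ln ((1-x)^(N+1))"
      using p by (intro ln_mult_pos) auto
    also have "ln ((q - x) * x^N) = ln (q-x) + ln (x^N)" using p by (intro ln_mult_pos) auto
    also have "ln ((1-x)^(N+1)) = real (N+1) * ln (1-x)" by (rule ln_realpow)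
    also have "ln (x^N) = real N * ln x" by (rule ln_realpow)
    finally show ?thesis by (simp add: L_def)
  qed
  have gpos: "0 < gg q N x" if "0 < x" "x < q" for x
    using that q unfolding gg_def by (intro divide_pos_pos mult_pos_pos) auto
  have D: "DERIV L x :> psi q N x / x" if "0 < x" "x < q" for x
  proof -
    have p: "0 < 1-x-q" "0 < q - x" "0 < x" "0 < 1-x" using that q by auto
    have "DERIV L x :> (-1)/(1-x-q) - ((-1)/(q-x) + real N * (1/x) + real (N+1) * ((-1)/(1-x)))"
      unfolding L_def using p by (auto intro!: derivative_eq_intros)
    moreover have "(-1)/(1-x-q) - ((-1)/(q-x) + real N * (1/x) + real (N+1) * ((-1)/(1-x))) = psi q N x / x"
    proof -
      have nz: "1-x-q \<noteq> 0" "q-x \<noteq> 0" "x \<noteq> 0" "1-x \<noteq> 0" "1-q-x \<noteq> 0" using p by auto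
      have i1: "1/(q-x) - 1/(1-x-q) = (1-2*q)/((q-x)*(1-q-x))"
        using nz by (simp add: divide_simps)
      have i2: "psi q N x / x = (1-2*q)/((q-x)*(1-q-x)) + (real N + 1)/(1-x) - real N/x"
        unfolding psi_def using nz by (simp add: diff_divide_distrib add_divide_distrib)
      have i3: "(-1)/(1-x-q) - ((-1)/(q-x) + real N * (1/x) + real (N+1) * ((-1)/(1-x)))
          = (1/(q-x) - 1/(1-x-q)) + (real N + 1)/(1-x) - real N/x"
        by (simp add: algebra_simps)
      show ?thesis unfolding i3 i1 i2 ..
    qed
    ultimately show ?thesis by simp
  qed
  show "gg q N x2 < gg q N x1" if h: "\<forall>x. x1 \<le> x \<and> x \<le> x2 \<longrightarrow> psi q N x < 0"
  proof -
    have "L x1 > L x2"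
    proof (rule DERIV_neg_imp_decreasing[OF x(2)])
      fix x assume "x1 \<le> x" "x \<le> x2"
      then show "\<exists>y. DERIV L x :> y \<and> y < 0" using D[of x] h x by (intro exI[of _ "psi q N x / x"]) (auto simp: divide_neg_pos)
    qed
    then show ?thesis using lng[of x1] lng[of x2] gpos[of x1] gpos[of x2] x
      by (metis ln_less_cancel_iff less_trans)
  qed
  show "gg q N x1 < gg q N x2" if h: "\<forall>x. x1 \<le> x \<and> x \<le> x2 \<longrightarrow> 0 < psi q N x"
  proof -
    have "L x1 < L x2"
    proof (rule DERIV_pos_imp_increasing[OF x(2)])
      fix x assume "x1 \<le> x" "x \<le> x2"
      then show "\<exists>y. DERIV L x :> y \<and> 0 < y" using D[of x] h x by (intro exI[of _ "psi q N x / x"]) auto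
    qed
    then show ?thesis using lng[of x1] lng[of x2] gpos[of x1] gpos[of x2] x
      by (metis ln_less_cancel_iff less_trans)
  qed
qed


definition SS :: "real \<Rightarrow> nat \<Rightarrow> real set" where
  "SS q n = {x. alpha q q < x \<and> x < q \<and> psi q n x \<le> 0}"
definition astar :: "real \<Rightarrow> nat \<Rightarrow> real" where
  "astar q n = Sup (insert (alpha q q) (SS q n))"
definition PP :: "real \<Rightarrow> real \<Rightarrow> real" where
  "PP q x = x*(1-x)/q"
definition phat :: "real \<Rightarrow> int \<Rightarrow> real" where
  "phat q m = PP q (astar q (nat m))"

lemma a0: assumes "0 < q" "q < 1/2"
  shows "0 < alpha q q" "alpha q q < q" "alpha q q * (1 - alpha q q) = q*q"
  using alpha_basic[of q q] assms by auto

lemma psi_mono_x: assumes "0 < q" "q < 1/2" "0 < x1" "x1 < x2" "x2 < q"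
  shows "psi q n x1 < psi q n x2"
proof -
  have t1: "x1*(1-2*q)/((q-x1)*(1-q-x1)) < x2*(1-2*q)/((q-x2)*(1-q-x2))"
  proof (rule frac_less)
    show "0 \<le> x1*(1-2*q)" using assms by simp
    show "x1*(1-2*q) < x2*(1-2*q)" using assms by simp
    show "0 < (q-x2)*(1-q-x2)" using assms by simp
    show "(q-x2)*(1-q-x2) \<le> (q-x1)*(1-q-x1)" using assms by (intro mult_mono) auto
  qed
  have t2: "x1/(1-x1) \<le> x2/(1-x2)" using assms by (intro frac_le) auto
  have "(real n + 1)*(x1/(1-x1)) \<le> (real n + 1)*(x2/(1-x2))" using t2 by (intro mult_left_mono) auto
  then show ?thesis using t1 unfolding psi_def by linarith
qed

lemma psi_mono_n: assumes "0 < x" "x < 1/2" "n \<le> n'"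
  shows "psi q n' x \<le> psi q n x"
proof -
  have "x/(1-x) < 1" using assms by simp
  then have "(real n' - real n) * (x/(1-x) - 1) \<le> 0" using assms by (intro mult_nonneg_nonpos) auto
  moreover have "psi q n' x - psi q n x = (real n' - real n) * (x/(1-x) - 1)"
  proof -
    define y where "y = x/(1-x)"
    show ?thesis unfolding psi_def y_def[symmetric] by (simp add: algebra_simps)
  qed
  ultimately show ?thesis by linarith
qed

lemma xbound: assumes "0 < q" "q < 1/2"
  shows "\<exists>x'. alpha q q \<le> x' \<and> x' < q \<and> (\<forall>x. x' \<le> x \<and> x < q \<longrightarrow> 0 < psi q n x)"
proof -
  note A = a0[OF assms]
  define mm where "mm = min ((q - alpha q q)/2) (alpha q q * (1-2*q)/(real n + 1))"
  define x' where "x' = q - mm"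
  have m: "0 < mm" using A assms by (simp add: mm_def)
  have mm1: "mm \<le> (q - alpha q q)/2" "mm \<le> alpha q q * (1-2*q)/(real n + 1)"
    unfolding mm_def by (rule min.cobounded1, rule min.cobounded2)
  have "alpha q q \<le> x'" unfolding x'_def using A(2) mm1(1) by (simp add: field_simps)
  moreover have "x' < q" using m by (simp add: x'_def)
  moreover have "0 < psi q n x" if x: "x' \<le> x" "x < q" for x
  proof -
    have x0: "alpha q q \<le> x" using x \<open>alpha q q \<le> x'\<close> by simp
    have "q - x \<le> alpha q q * (1-2*q)/(real n + 1)" using x mm1 unfolding x'_def by linarith
    also have "\<dots> \<le> x * (1-2*q)/(real n + 1)" using x0 assms by (intro divide_right_mono mult_right_mono) auto
    finally have c1: "(q - x)*(real n + 1) \<le> x*(1-2*q)" by (simp add: field_simps)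
    have c2: "(q-x)*(1-q-x) < q - x" using x x0 A assms by (simp add: mult_less_cancel_left1)
    have "(q-x)*(1-q-x)*(real n + 1) < x*(1-2*q)"
    proof -
      have "(q-x)*(1-q-x)*(real n + 1) < (q-x)*(real n + 1)" using c2 by (intro mult_strict_right_mono) auto
      then show ?thesis using c1 by linarith
    qed
    moreover have D: "0 < (q-x)*(1-q-x)" using x x0 A assms by simp
    ultimately have "real n + 1 < x*(1-2*q)/((q-x)*(1-q-x))"
      by (subst pos_less_divide_eq[OF D]) (simp add: mult.commute)
    moreover have "0 \<le> (real n + 1)*(x/(1-x))" using x x0 A assms by simp
    ultimately show ?thesis unfolding psi_def by linarith
  qed
  ultimately show ?thesis by blast
qed


lemma alpha_strict_mono: assumes "0<q" "q \<le> p1" "p1<p2" "p2+q<1"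
  shows "alpha p1 q < alpha p2 q"
proof -
  have "p1*q < p2*q" using assms by simp
  then have "sqrt (1-4*p2*q) < sqrt (1-4*p1*q)" by simp
  then show ?thesis by (simp add: alpha_def)
qed

lemma PP_alpha: assumes "0<q" "q\<le>p" "p+q<1" shows "PP q (alpha p q) = p"
  using alpha_basic(3)[OF assms] assms(1) by (simp add: PP_def)

lemma PP_mono: assumes "0<q" "0 \<le> x1" "x1 \<le> x2" "x2 \<le> 1/2"
  shows "PP q x1 \<le> PP q x2"
proof -
  have "x2*(1-x2) - x1*(1-x1) = (x2-x1)*(1-x1-x2)" by (simp add: algebra_simps)
  moreover have "0 \<le> (x2-x1)*(1-x1-x2)" using assms by (intro mult_nonneg_nonneg) auto
  ultimately have "x1*(1-x1) \<le> x2*(1-x2)" by linarith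
  then show ?thesis using assms unfolding PP_def by (intro divide_right_mono) auto
qed

lemma PP_smono: assumes "0<q" "0 \<le> x1" "x1 < x2" "x1 + x2 < 1"
  shows "PP q x1 < PP q x2"
proof -
  have "x2*(1-x2) - x1*(1-x1) = (x2-x1)*(1-x1-x2)" by (simp add: algebra_simps)
  moreover have "0 < (x2-x1)*(1-x1-x2)" using assms by (intro mult_pos_pos) auto
  ultimately have "x1*(1-x1) < x2*(1-x2)" by linarith
  then show ?thesis using assms unfolding PP_def by (intro divide_strict_right_mono) auto
qed

lemma astar_props: assumes "0 < q" "q < 1/2"
  shows "alpha q q \<le> astar q n" "astar q n < q" "bdd_above (insert (alpha q q) (SS q n))"
proof -
  obtain x' where x': "alpha q q \<le> x'" "x' < q" "\<forall>x. x' \<le> x \<and> x < q \<longrightarrow> 0 < psi q n x"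
    using xbound[OF assms] by blast
  have ub: "\<forall>y \<in> insert (alpha q q) (SS q n). y \<le> x'"
  proof
    fix y assume y: "y \<in> insert (alpha q q) (SS q n)"
    show "y \<le> x'"
    proof (cases "y = alpha q q")
      case True then show ?thesis using x' by simp
    next
      case False
      then have "y < q" "psi q n y \<le> 0" using y by (auto simp: SS_def)
      show ?thesis
      proof (rule ccontr)
        assume "\<not> y \<le> x'"
        then have "x' \<le> y" by simp
        then have "0 < psi q n y" using x'(3) \<open>y < q\<close> by blast
        then show False using \<open>psi q n y \<le> 0\<close> by simp
      qed
    qed
  qed
  show bdd: "bdd_above (insert (alpha q q) (SS q n))" using ub by (auto intro: bdd_aboveI2)
  show "alpha q q \<le> astar q n" unfolding astar_def using bdd by (intro cSup_upper) auto
  have "astar q n \<le> x'" unfolding astar_def using ub by (intro cSup_least) auto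
  then show "astar q n < q" using x' by simp
qed


lemma Vq_form:
  assumes "0 < q" "q < p" "p < 1 - q"
  shows "Vval pi0 p q e = 1/(1 + (1-pi0)/pi0 * (q^(2*nat (Nval e)+1) * gg q (nat (Nval e)) (alpha p q)))"
  unfolding Vval_X Xg[OF assms] ..

lemma gg_pos: "0 < q \<Longrightarrow> q < 1/2 \<Longrightarrow> 0 < x \<Longrightarrow> x < q \<Longrightarrow> 0 < gg q N x"
  unfolding gg_def by (intro divide_pos_pos mult_pos_pos) auto

lemma part3:
  assumes pi: "0 < pi0" "pi0 < 1" and q: "0 < q" "q < 1/2"
  shows "q \<le> phat q (Nval e) \<and> phat q (Nval e) < 1 - q
             \<and> (\<forall>p1 p2. q < p1 \<and> p1 < p2 \<and> p2 < phat q (Nval e) \<longrightarrow>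
                   Vval pi0 p1 q e < Vval pi0 p2 q e)
             \<and> (\<forall>p1 p2. phat q (Nval e) < p1 \<and> p1 < p2 \<and> p2 < 1 - q \<longrightarrow>
                   Vval pi0 p2 q e < Vval pi0 p1 q e)"
proof -
  define n where "n = nat (Nval e)"
  define A where "A = insert (alpha q q) (SS q n)"
  define as where "as = astar q n"
  have ph: "phat q (Nval e) = PP q as" by (simp add: phat_def as_def n_def)
  note ap = astar_props[OF q, of n, folded as_def A_def]
  note a0q = a0[OF q]
  have asA: "as = Sup A" by (simp add: as_def astar_def A_def)
  have Ane: "A \<noteq> {}" by (simp add: A_def)
  have C: "0 < (1-pi0)/pi0" using pi by simp
  have qpos: "0 < q^(2*n+1)" using q by simp
  have V: "Vval pi0 p q e = 1/(1 + (1-pi0)/pi0 * (q^(2*n+1) * gg q n (alpha p q)))"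
    if "q < p" "p < 1-q" for p
    using Vq_form[OF q(1) that] by (simp add: n_def)
  have al: "alpha q q < alpha p q" "alpha p q < q" "PP q (alpha p q) = p" if "q < p" "p < 1-q" for p
  proof -
    show "alpha q q < alpha p q" using that q by (intro alpha_strict_mono) auto
    show "alpha p q < q" using alpha_basic(2)[of q p] that q by auto
    show "PP q (alpha p q) = p" using that q by (intro PP_alpha) auto
  qed
  have PPq: "PP q (alpha q q) = q" using q by (intro PP_alpha) auto
  have PP1: "PP q q = 1 - q" using q by (simp add: PP_def)
  have ph1: "q \<le> PP q as" using PP_mono[of q "alpha q q" as] ap a0q q PPq by auto
  have ph2: "PP q as < 1 - q" using PP_smono[of q as q] ap a0q q PP1 by auto
  have inc: "Vval pi0 p1 q e < Vval pi0 p2 q e" if p: "q < p1" "p1 < p2" "p2 < PP q as" for p1 p2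
  proof -
    have p2: "q < p2" "p2 < 1 - q" using p ph2 by auto
    have p1: "p1 < 1 - q" using p2 p by simp
    have a12: "alpha p1 q < alpha p2 q" using p p2 q by (intro alpha_strict_mono) auto
    have a2s: "alpha p2 q < as"
    proof (rule ccontr)
      assume "\<not> alpha p2 q < as"
      then have "PP q as \<le> PP q (alpha p2 q)" using ap a0q al[OF p2] q by (intro PP_mono) auto
      then show False using al(3)[OF p2] p by simp
    qed
    then obtain y where y: "y \<in> A" "alpha p2 q < y" using less_cSup_iff[OF Ane ap(3)] asA by auto
    have "y \<noteq> alpha q q" using y al[OF p2] by auto
    then have yS: "y < q" "psi q n y \<le> 0" using y(1) by (auto simp: A_def SS_def)
    have "\<forall>x. alpha p1 q \<le> x \<and> x \<le> alpha p2 q \<longrightarrow> psi q n x < 0"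
    proof (intro allI impI)
      fix x assume x: "alpha p1 q \<le> x \<and> x \<le> alpha p2 q"
      have "0 < x" using x al(1)[OF p(1) p1] a0q by simp
      then have "psi q n x < psi q n y" using x y yS q by (intro psi_mono_x) auto
      then show "psi q n x < 0" using yS by simp
    qed
    then have "gg q n (alpha p2 q) < gg q n (alpha p1 q)"
      using a12 al[OF p(1) p1] al[OF p2] a0q q by (intro gg_mono(1)) auto
    then have "q^(2*n+1) * gg q n (alpha p2 q) < q^(2*n+1) * gg q n (alpha p1 q)"
      using qpos by (rule mult_strict_left_mono)
    moreover have "0 < q^(2*n+1) * gg q n (alpha p2 q)"
      using qpos gg_pos[OF q, of "alpha p2 q"] al[OF p2] a0q by simp
    ultimately show ?thesis unfolding V[OF p(1) p1] V[OF p2] by (rule V_mono[OF C, rotated])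
  qed
  have dec: "Vval pi0 p2 q e < Vval pi0 p1 q e" if p: "PP q as < p1" "p1 < p2" "p2 < 1 - q" for p1 p2
  proof -
    have p1: "q < p1" "p1 < 1 - q" using p ph1 by auto
    have p2: "q < p2" using p1 p by simp
    have a12: "alpha p1 q < alpha p2 q" using p p1 q by (intro alpha_strict_mono) auto
    have a1s: "as < alpha p1 q"
    proof (rule ccontr)
      assume "\<not> as < alpha p1 q"
      then have "PP q (alpha p1 q) \<le> PP q as" using ap a0q al[OF p1] q by (intro PP_mono) auto
      then show False using al(3)[OF p1] p by simp
    qed
    have "\<forall>x. alpha p1 q \<le> x \<and> x \<le> alpha p2 q \<longrightarrow> 0 < psi q n x"
    proof (intro allI impI)
      fix x assume x: "alpha p1 q \<le> x \<and> x \<le> alpha p2 q"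
      have xr: "alpha q q < x" "x < q" using x al[OF p1] al[OF p2 p(3)] by auto
      have "x \<notin> SS q n"
      proof
        assume "x \<in> SS q n"
        then have "x \<le> as" unfolding asA A_def using ap(3) unfolding A_def by (intro cSup_upper) auto
        then show False using a1s x by simp
      qed
      then show "0 < psi q n x" using xr by (auto simp: SS_def)
    qed
    then have "gg q n (alpha p1 q) < gg q n (alpha p2 q)"
      using a12 al[OF p1] al[OF p2 p(3)] a0q q by (intro gg_mono(2)) auto
    then have "q^(2*n+1) * gg q n (alpha p1 q) < q^(2*n+1) * gg q n (alpha p2 q)"
      using qpos by (rule mult_strict_left_mono)
    moreover have "0 < q^(2*n+1) * gg q n (alpha p1 q)"
      using qpos gg_pos[OF q, of "alpha p1 q"] al[OF p1] a0q by simp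
    ultimately show ?thesis unfolding V[OF p1] V[OF p2 p(3)] by (rule V_mono[OF C, rotated])
  qed
  show ?thesis unfolding ph using ph1 ph2 inc dec by blast
qed

lemma part3_mono:
  assumes q: "0 < q" "q < 1/2" and le: "Nval e \<le> Nval e'"
  shows "phat q (Nval e) \<le> phat q (Nval e')"
proof -
  define n where "n = nat (Nval e)"
  define n' where "n' = nat (Nval e')"
  have nn: "n \<le> n'" using le by (simp add: n_def n'_def)
  have sub: "insert (alpha q q) (SS q n) \<subseteq> insert (alpha q q) (SS q n')"
  proof
    fix x assume "x \<in> insert (alpha q q) (SS q n)"
    moreover have "psi q n' x \<le> psi q n x" if "x \<in> SS q n"
      using that a0[OF q] q nn by (intro psi_mono_n) (auto simp: SS_def)
    ultimately show "x \<in> insert (alpha q q) (SS q n')" by (auto simp: SS_def)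
  qed
  have "astar q n \<le> astar q n'" unfolding astar_def
    by (rule cSup_subset_mono[OF _ astar_props(3)[OF q] sub]) simp
  then have "PP q (astar q n) \<le> PP q (astar q n')"
    using astar_props[OF q, of n] astar_props[OF q, of n'] a0[OF q] q by (intro PP_mono) auto
  then show ?thesis by (simp add: phat_def n_def n'_def)
qed


theorem proposition7:
  fixes pi0 :: real
  assumes "0 < pi0" and "pi0 < 1"
  shows
    \<comment> \<open>(1) decreasing in kappa, gamma fixed\<close>
    "(\<forall>e \<gamma> \<kappa>1 \<kappa>2. 1 < \<gamma> \<and> 1 < \<kappa>1 \<and> \<kappa>1 < \<kappa>2 \<longrightarrow>
        Vgk pi0 \<gamma> \<kappa>2 e < Vgk pi0 \<gamma> \<kappa>1 e)
   \<and> \<comment> \<open>(2a) N(e) = 0: decreasing in gamma, kappa fixed\<close>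
     (\<forall>e \<kappa> \<gamma>1 \<gamma>2. Nval e = 0 \<and> 1 < \<kappa> \<and> 1 < \<gamma>1 \<and> \<gamma>1 < \<gamma>2 \<longrightarrow>
        Vgk pi0 \<gamma>2 \<kappa> e < Vgk pi0 \<gamma>1 \<kappa> e)
   \<and> \<comment> \<open>(2b) N(e) > 0: increasing in gamma above a threshold depending only on N(e), which tends to 1\<close>
     (\<exists>ghat :: int \<Rightarrow> real.
        (\<forall>e. 0 < Nval e \<longrightarrow> 1 < ghat (Nval e) \<and>
           (\<forall>\<kappa> \<gamma>1 \<gamma>2. 1 < \<kappa> \<and> ghat (Nval e) < \<gamma>1 \<and> \<gamma>1 < \<gamma>2 \<longrightarrow>
              Vgk pi0 \<gamma>1 \<kappa> e < Vgk pi0 \<gamma>2 \<kappa> e))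
        \<and> (ghat \<longlongrightarrow> 1) at_top)
   \<and> \<comment> \<open>(3) single-peakedness in p for fixed q, peak non-decreasing in N(e)\<close>
     (\<exists>phat :: real \<Rightarrow> int \<Rightarrow> real.
        \<forall>q. 0 < q \<and> q < 1/2 \<longrightarrow>
          (\<forall>e. q \<le> phat q (Nval e) \<and> phat q (Nval e) < 1 - q
             \<and> (\<forall>p1 p2. q < p1 \<and> p1 < p2 \<and> p2 < phat q (Nval e) \<longrightarrow>
                   Vval pi0 p1 q e < Vval pi0 p2 q e)
             \<and> (\<forall>p1 p2. phat q (Nval e) < p1 \<and> p1 < p2 \<and> p2 < 1 - q \<longrightarrow>
                   Vval pi0 p2 q e < Vval pi0 p1 q e))
          \<and> (\<forall>e e'. Nval e \<le> Nval e' \<longrightarrow> phat q (Nval e) \<le> phat q (Nval e')))"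
  proof -
  have P1: "\<forall>e \<gamma> \<kappa>1 \<kappa>2. 1 < \<gamma> \<and> 1 < \<kappa>1 \<and> \<kappa>1 < \<kappa>2 \<longrightarrow>
        Vgk pi0 \<gamma> \<kappa>2 e < Vgk pi0 \<gamma> \<kappa>1 e"
    using part1[OF assms] by blast
  have P2: "\<forall>e \<kappa> \<gamma>1 \<gamma>2. Nval e = 0 \<and> 1 < \<kappa> \<and> 1 < \<gamma>1 \<and> \<gamma>1 < \<gamma>2 \<longrightarrow>
        Vgk pi0 \<gamma>2 \<kappa> e < Vgk pi0 \<gamma>1 \<kappa> e"
    using part2a[OF assms] by blast
  have P3: "\<exists>ghat :: int \<Rightarrow> real.
        (\<forall>e. 0 < Nval e \<longrightarrow> 1 < ghat (Nval e) \<and>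
           (\<forall>\<kappa> \<gamma>1 \<gamma>2. 1 < \<kappa> \<and> ghat (Nval e) < \<gamma>1 \<and> \<gamma>1 < \<gamma>2 \<longrightarrow>
              Vgk pi0 \<gamma>1 \<kappa> e < Vgk pi0 \<gamma>2 \<kappa> e))
        \<and> (ghat \<longlongrightarrow> 1) at_top"
    apply (rule exI[of _ ghat])
    using ghat_gt1 part2b[OF assms] ghat_lim by blast
  have P4: "\<exists>phat :: real \<Rightarrow> int \<Rightarrow> real.
        \<forall>q. 0 < q \<and> q < 1/2 \<longrightarrow>
          (\<forall>e. q \<le> phat q (Nval e) \<and> phat q (Nval e) < 1 - q
             \<and> (\<forall>p1 p2. q < p1 \<and> p1 < p2 \<and> p2 < phat q (Nval e) \<longrightarrow>
                   Vval pi0 p1 q e < Vval pi0 p2 q e)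
             \<and> (\<forall>p1 p2. phat q (Nval e) < p1 \<and> p1 < p2 \<and> p2 < 1 - q \<longrightarrow>
                   Vval pi0 p2 q e < Vval pi0 p1 q e))
          \<and> (\<forall>e e'. Nval e \<le> Nval e' \<longrightarrow> phat q (Nval e) \<le> phat q (Nval e'))"
    apply (rule exI[of _ phat])
    using part3[OF assms] part3_mono by blast
  show ?thesis using P1 P2 P3 P4 by blast
qed

end
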